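(* Let $M_0$ be an r-oriented two-sided associative cone in $\mathbb{R}^7$, written as $M_0=\{r\phi(\sigma):\sigma\in\Sigma,r\in\mathbb{R}\}$ for a real analytic map $\phi:\Sigma\to S^6$ from a Riemann surface $\Sigma$ (with the complex structure induced by $\phi^*g$ and the orientation making $\varphi(\phi,\partial_s\phi,\partial_t\phi)>0$ for positive coordinates). Let $w$ be a holomorphic vector field on $\Sigma$ and set $\psi=\mathcal{L}_w\phi:\Sigma\to\mathbb{R}^7$, the Lie derivative of $\phi$ along $w$. Then $M=\{r\phi(\sigma)+\psi(\sigma):\sigma\in\Sigma,r\in\mathbb{R}\}$ is an r-oriented ruled associative 3-fold in $\mathbb{R}^7$ with asymptotic cone $M_0$.
   Context: Let $(x_1,\dots,x_7)$ be coordinates on $\mathbb{R}^7$ with Euclidean metric $g$, $dx_{ijk}=dx_i\wedge dx_j\wedge dx_k$, and $\varphi=dx_{123}+dx_{145}+dx_{167}+dx_{246}-dx_{257}-dx_{347}-dx_{356}$. An oriented 3-dimensional (immersed) submanifold $N$ is associative if $\varphi|_{T_xN}=\mathrm{vol}_{T_xN}$ for all $x\in N$. A cone is a submanifold invariant under dilations, nonsingular except possibly at $0$; it is two-sided if $C=-C$. An r-oriented ruled submanifold is one of the form $\{r\phi(\sigma)+\psi(\sigma):\sigma\in\Sigma,r\in\mathbb{R}\}$ with $\phi:\Sigma\to S^6$, $\psi:\Sigma\to\mathbb{R}^7$, viewed as the union of the affine lines through $\psi(\sigma)$ with oriented unit direction $\phi(\sigma)$; its asymptotic cone is $\{r\phi(\sigma):\sigma\in\Sigma,r\in\mathbb{R}\}$.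 An r-oriented two-sided cone is an r-oriented ruled submanifold with $\psi\equiv0$. *)

theory Defs
  imports "HOL-Complex_Analysis.Complex_Analysis"
begin

definition dx3 :: "7 \<Rightarrow> 7 \<Rightarrow> 7 \<Rightarrow> real^7 \<Rightarrow> real^7 \<Rightarrow> real^7 \<Rightarrow> real" where
  "dx3 i j k u v w =
     u$i * (v$j * w$k - v$k * w$j)
   - v$i * (u$j * w$k - u$k * w$j)
   + w$i * (u$j * v$k - u$k * v$j)"

definition G2phi :: "real^7 \<Rightarrow> real^7 \<Rightarrow> real^7 \<Rightarrow> real" where
  "G2phi u v w = dx3 1 2 3 u v w + dx3 1 4 5 u v w + dx3 1 6 7 u v w + dx3 2 4 6 u v w
               - dx3 2 5 7 u v w - dx3 3 4 7 u v w - dx3 3 5 6 u v w"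

text \<open>Euclidean 3-volume of the parallelepiped spanned by u, v, w
  (square root of the Gram determinant), i.e. vol evaluated on (u,v,w).\<close>
definition vol3 :: "real^7 \<Rightarrow> real^7 \<Rightarrow> real^7 \<Rightarrow> real" where
  "vol3 u v w = sqrt (
      (u \<bullet> u) * ((v \<bullet> v) * (w \<bullet> w) - (v \<bullet> w) * (w \<bullet> v))
    - (u \<bullet> v) * ((v \<bullet> u) * (w \<bullet> w) - (v \<bullet> w) * (w \<bullet> u))
    + (u \<bullet> w) * ((v \<bullet> u) * (w \<bullet> v) - (v \<bullet> v) * (w \<bullet> u)))"

text \<open>A 3-parameter family F(r, s + i t) is associative (with the orientation given by
  the coordinate order (r, s, t)) on S: at each point F is differentiable and
  phi(F_r, F_s, F_t) = vol(F_r, F_s, F_t), i.e. phi restricted to the oriented tangent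
  space equals its volume form.\<close>
definition associative_param :: "(real \<times> complex \<Rightarrow> real^7) \<Rightarrow> (real \<times> complex) set \<Rightarrow> bool" where
  "associative_param F S \<longleftrightarrow>
     (\<forall>x\<in>S. F differentiable (at x) \<and>
        G2phi (frechet_derivative F (at x) (1, 0)) (frechet_derivative F (at x) (0, 1))
              (frechet_derivative F (at x) (0, \<i>))
      = vol3 (frechet_derivative F (at x) (1, 0)) (frechet_derivative F (at x) (0, 1))
              (frechet_derivative F (at x) (0, \<i>)))"

text \<open>Real analyticity of a map from an open subset of C = R^2 into R^7:
  locally the sum of a (unconditionally, equivalently absolutely) convergent
  double power series in s - s0, t - t0.\<close>
definition real_analytic_on :: "(complex \<Rightarrow> real^7) \<Rightarrow> complex set \<Rightarrow> bool" where
  "real_analytic_on f U \<longleftrightarrow>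
     (\<forall>p\<in>U. \<exists>e>0. \<exists>c :: nat \<Rightarrow> nat \<Rightarrow> real^7. \<forall>z\<in>ball p e.
        ((\<lambda>(i, j). ((Re z - Re p) ^ i * (Im z - Im p) ^ j) *\<^sub>R c i j) has_sum f z) UNIV)"

definition ruled_set :: "(complex \<Rightarrow> real^7) \<Rightarrow> (complex \<Rightarrow> real^7) \<Rightarrow> complex set \<Rightarrow> (real^7) set" where
  "ruled_set \<phi> \<psi> U = {r *\<^sub>R \<phi> \<sigma> + \<psi> \<sigma> | r \<sigma>. \<sigma> \<in> U}"

definition asymptotic_cone :: "(complex \<Rightarrow> real^7) \<Rightarrow> (complex \<Rightarrow> real^7) \<Rightarrow> complex set \<Rightarrow> (real^7) set" where
  "asymptotic_cone \<phi> \<psi> U = {r *\<^sub>R \<phi> \<sigma> | r \<sigma>. \<sigma> \<in> U}"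

text \<open>Lie derivative of a map phi along a vector field w (w(z) viewed as a tangent vector
  in R^2 = C): L_w phi = d phi (w).\<close>
definition lie_deriv :: "(complex \<Rightarrow> complex) \<Rightarrow> (complex \<Rightarrow> real^7) \<Rightarrow> complex \<Rightarrow> real^7" where
  "lie_deriv w \<phi> z = frechet_derivative \<phi> (at z) (w z)"

end

theory Submission
  imports Defs
begin



lemma exhaust_7:
  fixes x :: 7
  shows "x = 1 \<or> x = 2 \<or> x = 3 \<or> x = 4 \<or> x = 5 \<or> x = 6 \<or> x = 7"
proof (induct x)
  case (of_int z)
  then have "z = 0 \<or> z = 1 \<or> z = 2 \<or> z = 3 \<or> z = 4 \<or> z = 5 \<or> z = 6" by simp presburger
  then show ?case by (elim disjE) simp_all
qed

lemma UNIV_7: "UNIV = {1, 2, 3, 4, 5, 6, 7::7}"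
  using exhaust_7 by auto

lemma sum_7: "sum f (UNIV::7 set) = f 1 + f 2 + f 3 + f 4 + f 5 + f 6 + f 7"
  unfolding UNIV_7 by (simp add: ac_simps)


lemma forall_7: "(\<forall>i::7. P i) \<longleftrightarrow> P 1 \<and> P 2 \<and> P 3 \<and> P 4 \<and> P 5 \<and> P 6 \<and> P 7"
proof -
  have "(\<forall>i::7. P i) \<longleftrightarrow> (\<forall>i\<in>UNIV. P i)" by simp
  also have "\<dots> \<longleftrightarrow> P 1 \<and> P 2 \<and> P 3 \<and> P 4 \<and> P 5 \<and> P 6 \<and> P 7" unfolding UNIV_7 by simp
  finally show ?thesis .
qed

lemma vec7_eq: "(x::real^7) = y \<longleftrightarrow> (vec_nth x 1) = (vec_nth y 1) \<and> (vec_nth x 2) = (vec_nth y 2) \<and> (vec_nth x 3) = (vec_nth y 3) \<and> (vec_nth x 4) = (vec_nth y 4) \<and> (vec_nth x 5) = (vec_nth y 5) \<and> (vec_nth x 6) = (vec_nth y 6) \<and> (vec_nth x 7) = (vec_nth y 7)"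
  unfolding vec_eq_iff forall_7 ..

lemma inner7: "(x::real^7) \<bullet> y = (vec_nth x 1) * (vec_nth y 1) + (vec_nth x 2) * (vec_nth y 2) + (vec_nth x 3) * (vec_nth y 3) + (vec_nth x 4) * (vec_nth y 4) + (vec_nth x 5) * (vec_nth y 5) + (vec_nth x 6) * (vec_nth y 6) + (vec_nth x 7) * (vec_nth y 7)"
  by (simp add: inner_vec_def sum_7)

definition cr :: "real^7 \<Rightarrow> real^7 \<Rightarrow> real^7" where
 "cr u v = (\<chi> k. if k = 1 then (vec_nth u 2) * (vec_nth v 3) - (vec_nth u 3) * (vec_nth v 2) + (vec_nth u 4) * (vec_nth v 5) - (vec_nth u 5) * (vec_nth v 4) + (vec_nth u 6) * (vec_nth v 7) - (vec_nth u 7) * (vec_nth v 6)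
   else if k = 2 then (vec_nth u 3) * (vec_nth v 1) - (vec_nth u 1) * (vec_nth v 3) + (vec_nth u 4) * (vec_nth v 6) - (vec_nth u 6) * (vec_nth v 4) - (vec_nth u 5) * (vec_nth v 7) + (vec_nth u 7) * (vec_nth v 5)
   else if k = 3 then (vec_nth u 1) * (vec_nth v 2) - (vec_nth u 2) * (vec_nth v 1) - (vec_nth u 4) * (vec_nth v 7) + (vec_nth u 7) * (vec_nth v 4) - (vec_nth u 5) * (vec_nth v 6) + (vec_nth u 6) * (vec_nth v 5)
   else if k = 4 then (vec_nth u 5) * (vec_nth v 1) - (vec_nth u 1) * (vec_nth v 5) + (vec_nth u 6) * (vec_nth v 2) - (vec_nth u 2) * (vec_nth v 6) - (vec_nth u 7) * (vec_nth v 3) + (vec_nth u 3) * (vec_nth v 7)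
   else if k = 5 then (vec_nth u 1) * (vec_nth v 4) - (vec_nth u 4) * (vec_nth v 1) - (vec_nth u 7) * (vec_nth v 2) + (vec_nth u 2) * (vec_nth v 7) - (vec_nth u 6) * (vec_nth v 3) + (vec_nth u 3) * (vec_nth v 6)
   else if k = 6 then (vec_nth u 7) * (vec_nth v 1) - (vec_nth u 1) * (vec_nth v 7) + (vec_nth u 2) * (vec_nth v 4) - (vec_nth u 4) * (vec_nth v 2) - (vec_nth u 3) * (vec_nth v 5) + (vec_nth u 5) * (vec_nth v 3)
   else (vec_nth u 1) * (vec_nth v 6) - (vec_nth u 6) * (vec_nth v 1) - (vec_nth u 2) * (vec_nth v 5) + (vec_nth u 5) * (vec_nth v 2) - (vec_nth u 3) * (vec_nth v 4) + (vec_nth u 4) * (vec_nth v 3))"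

lemma cr_comp:
 "vec_nth (cr u v) 1 = (vec_nth u 2) * (vec_nth v 3) - (vec_nth u 3) * (vec_nth v 2) + (vec_nth u 4) * (vec_nth v 5) - (vec_nth u 5) * (vec_nth v 4) + (vec_nth u 6) * (vec_nth v 7) - (vec_nth u 7) * (vec_nth v 6)"
 "vec_nth (cr u v) 2 = (vec_nth u 3) * (vec_nth v 1) - (vec_nth u 1) * (vec_nth v 3) + (vec_nth u 4) * (vec_nth v 6) - (vec_nth u 6) * (vec_nth v 4) - (vec_nth u 5) * (vec_nth v 7) + (vec_nth u 7) * (vec_nth v 5)"
 "vec_nth (cr u v) 3 = (vec_nth u 1) * (vec_nth v 2) - (vec_nth u 2) * (vec_nth v 1) - (vec_nth u 4) * (vec_nth v 7) + (vec_nth u 7) * (vec_nth v 4) - (vec_nth u 5) * (vec_nth v 6) + (vec_nth u 6) * (vec_nth v 5)"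
 "vec_nth (cr u v) 4 = (vec_nth u 5) * (vec_nth v 1) - (vec_nth u 1) * (vec_nth v 5) + (vec_nth u 6) * (vec_nth v 2) - (vec_nth u 2) * (vec_nth v 6) - (vec_nth u 7) * (vec_nth v 3) + (vec_nth u 3) * (vec_nth v 7)"
 "vec_nth (cr u v) 5 = (vec_nth u 1) * (vec_nth v 4) - (vec_nth u 4) * (vec_nth v 1) - (vec_nth u 7) * (vec_nth v 2) + (vec_nth u 2) * (vec_nth v 7) - (vec_nth u 6) * (vec_nth v 3) + (vec_nth u 3) * (vec_nth v 6)"
 "vec_nth (cr u v) 6 = (vec_nth u 7) * (vec_nth v 1) - (vec_nth u 1) * (vec_nth v 7) + (vec_nth u 2) * (vec_nth v 4) - (vec_nth u 4) * (vec_nth v 2) - (vec_nth u 3) * (vec_nth v 5) + (vec_nth u 5) * (vec_nth v 3)"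
 "vec_nth (cr u v) 7 = (vec_nth u 1) * (vec_nth v 6) - (vec_nth u 6) * (vec_nth v 1) - (vec_nth u 2) * (vec_nth v 5) + (vec_nth u 5) * (vec_nth v 2) - (vec_nth u 3) * (vec_nth v 4) + (vec_nth u 4) * (vec_nth v 3)"
  by (simp_all add: cr_def)

lemma G2phi_cr: "G2phi u v w = cr u v \<bullet> w"
  unfolding G2phi_def dx3_def inner7 cr_comp by algebra


lemma cr_anti: "cr u v = - cr v u"
  by (simp add: vec7_eq cr_comp)


lemma cr_double: "cr x (cr x y) = (x \<bullet> y) *\<^sub>R x - (x \<bullet> x) *\<^sub>R y"
  unfolding vec7_eq cr_comp inner7 by (simp add: algebra_simps)


lemma cr_swap: "cr x y \<bullet> w = - (cr x w \<bullet> y)"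
  unfolding cr_comp inner7 by algebra


lemma cr_self1: "cr x y \<bullet> x = 0"
  unfolding cr_comp inner7 by algebra


lemma cr_self2: "cr x y \<bullet> y = 0"
  unfolding cr_comp inner7 by algebra


lemma cr_add_left: "cr (a + b) c = cr a c + cr b c"
  by (simp add: vec7_eq cr_comp algebra_simps)

lemma cr_add_right: "cr a (b + c) = cr a b + cr a c"
  by (simp add: vec7_eq cr_comp algebra_simps)

lemma cr_scale_left: "cr (r *\<^sub>R a) c = r *\<^sub>R cr a c"
  by (simp add: vec7_eq cr_comp algebra_simps)

lemma cr_scale_right: "cr a (r *\<^sub>R c) = r *\<^sub>R cr a c"
  by (simp add: vec7_eq cr_comp algebra_simps)


lemma cr_norm2: "cr x y \<bullet> cr x y = (x \<bullet> x) * (y \<bullet> y) - (x \<bullet> y)^2"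
proof -
  have "cr x y \<bullet> cr x y = - (cr x (cr x y) \<bullet> y)" by (rule cr_swap)
  also have "\<dots> = (x \<bullet> x) * (y \<bullet> y) - (x \<bullet> y)^2"
    unfolding cr_double by (simp add: inner_diff_right inner_commute[of y x] power2_eq_square algebra_simps)
  finally show ?thesis .
qed


definition pst :: "(nat \<Rightarrow> nat \<Rightarrow> 'a::real_normed_vector) \<Rightarrow> complex \<Rightarrow> complex \<Rightarrow> nat \<times> nat \<Rightarrow> 'a" where
  "pst c p z = (\<lambda>(i, j). ((Re z - Re p) ^ i * (Im z - Im p) ^ j) *\<^sub>R c i j)"

definition dcx :: "(nat \<Rightarrow> nat \<Rightarrow> 'a::real_normed_vector) \<Rightarrow> nat \<Rightarrow> nat \<Rightarrow> 'a" where
  "dcx c i j = real (Suc i) *\<^sub>R c (Suc i) j"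

definition dcy :: "(nat \<Rightarrow> nat \<Rightarrow> 'a::real_normed_vector) \<Rightarrow> nat \<Rightarrow> nat \<Rightarrow> 'a" where
  "dcy c i j = real (Suc j) *\<^sub>R c i (Suc j)"

lemma dcx_dcy: "dcx (dcy c) = dcy (dcx c)"
  by (intro ext) (simp add: dcx_def dcy_def)

definition sq :: "nat \<Rightarrow> (nat \<times> nat) set" where
  "sq n = {..<n} \<times> {..<n}"

lemma has_sum_bounded_terms:
  fixes g :: "'b \<Rightarrow> 'a::real_normed_vector"
  assumes "(g has_sum s) A"
  shows "\<exists>B. \<forall>k\<in>A. norm (g k) \<le> B"
proof -
  have "eventually (\<lambda>F. dist (sum g F) s < 1) (finite_subsets_at_top A)"
    using assms unfolding has_sum_def tendsto_iff by auto
  then obtain X where X: "finite X" "X \<subseteq> A"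
    "\<And>Y. finite Y \<Longrightarrow> X \<subseteq> Y \<Longrightarrow> Y \<subseteq> A \<Longrightarrow> dist (sum g Y) s < 1"
    unfolding eventually_finite_subsets_at_top by metis
  show ?thesis
  proof (intro exI ballI)
    fix k assume k: "k \<in> A"
    have nn: "0 \<le> sum (\<lambda>x. norm (g x)) X" by (simp add: sum_nonneg)
    show "norm (g k) \<le> 2 + sum (\<lambda>x. norm (g x)) X"
    proof (cases "k \<in> X")
      case True
      then have "norm (g k) \<le> sum (\<lambda>x. norm (g x)) X"
        using X(1) by (intro member_le_sum) auto
      then show ?thesis by simp
    next
      case False
      have "sum g (insert k X) = g k + sum g X" using False X(1) by simp
      then have "g k = (sum g (insert k X) - s) - (sum g X - s)" by (simp add: algebra_simps)
      then have "norm (g k) \<le> norm (sum g (insert k X) - s) + norm (sum g X - s)"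
        by (metis norm_triangle_ineq4)
      also have "\<dots> < 1 + 1"
        using X(3)[of "insert k X"] X(3)[of X] X(1,2) k by (intro add_strict_mono) (auto simp: dist_norm)
      finally show ?thesis using nn by simp
    qed
  qed
qed

lemma filterlim_sq: "filterlim sq (finite_subsets_at_top UNIV) sequentially"
  unfolding filterlim_finite_subsets_at_top
proof (intro allI impI)
  fix X :: "(nat \<times> nat) set" assume "finite X \<and> X \<subseteq> UNIV"
  then have fin: "finite (fst ` X \<union> snd ` X)" by simp
  obtain N where N: "\<And>a. a \<in> fst ` X \<union> snd ` X \<Longrightarrow> a < N"
    using finite_nat_bounded[OF fin] by (auto simp: lessThan_def)
  show "\<forall>\<^sub>F n in sequentially. finite (sq n) \<and> X \<subseteq> sq n \<and> sq n \<subseteq> UNIV"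
    unfolding eventually_sequentially
  proof (intro exI allI impI conjI)
    fix n assume "N \<le> n"
    show "finite (sq n)" by (simp add: sq_def)
    show "X \<subseteq> sq n"
    proof
      fix x assume "x \<in> X"
      then have "fst x < N" "snd x < N" using N by auto
      then show "x \<in> sq n" using \<open>N \<le> n\<close> by (cases x) (auto simp: sq_def)
    qed
  qed simp
qed

lemma has_sum_sq_tendsto:
  assumes "(g has_sum s) UNIV"
  shows "(\<lambda>n. sum g (sq n)) \<longlonglongrightarrow> s"
  using assms unfolding has_sum_def
  by (rule filterlim_compose[OF _ filterlim_sq])

lemma unif_sq:
  fixes t :: "'z \<Rightarrow> nat \<times> nat \<Rightarrow> 'a::banach"
  assumes M: "M summable_on UNIV" and bd: "\<And>z k. z \<in> S \<Longrightarrow> norm (t z k) \<le> M k"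
  shows unif_sq_summable: "\<And>z. z \<in> S \<Longrightarrow> t z summable_on UNIV"
    and unif_sq_conv: "\<And>e. e > 0 \<Longrightarrow> \<forall>\<^sub>F n in sequentially. \<forall>z\<in>S. norm (sum (t z) (sq n) - infsum (t z) UNIV) \<le> e"
proof -
  have Mnn: "\<And>k. S \<noteq> {} \<Longrightarrow> 0 \<le> M k" using bd norm_ge_zero order_trans by blast
  have abs: "(\<lambda>k. norm (t z k)) summable_on B" if "z \<in> S" for z B
  proof -
    have "M summable_on B" using M by (rule summable_on_subset_banach) simp
    then show ?thesis using bd[OF that] by (rule summable_on_comparison_test) auto
  qed
  have summ: "t z summable_on B" if "z \<in> S" for z B
    using abs[OF that] by (rule abs_summable_summable)
  then show "\<And>z. z \<in> S \<Longrightarrow> t z summable_on UNIV" by blast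
  fix e :: real assume e: "e > 0"
  have "(\<lambda>n. sum M (sq n)) \<longlonglongrightarrow> infsum M UNIV"
    using M by (intro has_sum_sq_tendsto) simp
  then have ev: "\<forall>\<^sub>F n in sequentially. dist (sum M (sq n)) (infsum M UNIV) < e"
    using e by (simp add: tendsto_iff)
  show "\<forall>\<^sub>F n in sequentially. \<forall>z\<in>S. norm (sum (t z) (sq n) - infsum (t z) UNIV) \<le> e"
    using ev
  proof eventually_elim
    case (elim n)
    show ?case
    proof
      fix z assume z: "z \<in> S"
      have fin: "finite (sq n)" by (simp add: sq_def)
      have MC: "M summable_on (- sq n)" using M by (rule summable_on_subset_banach) simp
      have Msplit: "infsum M UNIV = sum M (sq n) + infsum M (- sq n)"
        using infsum_Un_disjoint[of M "sq n" "- sq n"] MC fin by (simp add: Compl_partition)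
      have tsplit: "infsum (t z) UNIV = sum (t z) (sq n) + infsum (t z) (- sq n)"
        using infsum_Un_disjoint[of "t z" "sq n" "- sq n"] summ[OF z] fin by (simp add: Compl_partition)
      have "norm (sum (t z) (sq n) - infsum (t z) UNIV) = norm (infsum (t z) (- sq n))"
        using tsplit by (simp add: norm_minus_commute)
      also have "\<dots> \<le> infsum (\<lambda>k. norm (t z k)) (- sq n)"
        using abs[OF z] by (rule norm_infsum_bound)
      also have "\<dots> \<le> infsum M (- sq n)"
        using abs[OF z] MC bd[OF z] by (rule infsum_mono)
      also have "\<dots> = infsum M UNIV - sum M (sq n)" using Msplit by simp
      also have "\<dots> \<le> e" using elim by (simp add: dist_norm)
      finally show "norm (sum (t z) (sq n) - infsum (t z) UNIV) \<le> e" .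
    qed
  qed
qed

lemma summable_on_prod_nat:
  fixes a b :: "nat \<Rightarrow> real"
  assumes "summable a" "summable b" "\<And>i. a i \<ge> 0" "\<And>j. b j \<ge> 0"
  shows "(\<lambda>(i,j). a i * b j) summable_on UNIV"
proof -
  have hb: "(b has_sum suminf b) UNIV"
    using assms by (intro sums_nonneg_imp_has_sum) (simp_all add: summable_sums)
  have "(\<lambda>(i,j). a i * b j) summable_on Sigma UNIV (\<lambda>_. UNIV)"
  proof (rule summable_on_SigmaI)
    show "((\<lambda>y. (\<lambda>(i,j). a i * b j) (x, y)) has_sum a x * suminf b) UNIV" for x
      using has_sum_cmult_right[OF hb, of "a x"] by simp
    show "(\<lambda>x. a x * suminf b) summable_on UNIV"
      using assms by (intro summable_nonneg_imp_summable_on summable_mult2 mult_nonneg_nonneg suminf_nonneg) auto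
  qed (use assms in auto)
  then show ?thesis by simp
qed

lemma summable_n_geom:
  fixes q :: real
  assumes "0 \<le> q" "q < 1"
  shows "summable (\<lambda>i. real i * q ^ (i - 1))"
proof -
  have "summable (\<lambda>n. diffs (\<lambda>_. 1::real) n * q ^ n)"
  proof (rule termdiff_converges[where K=1])
    show "norm q < 1" using assms by simp
    show "summable (\<lambda>n. 1 * x ^ n)" if "norm x < 1" for x :: real
      using that by (simp add: summable_geometric)
  qed
  then have "summable (\<lambda>k. real (Suc k) * q ^ k)" by (simp add: diffs_def)
  then show ?thesis by (subst summable_Suc_iff[symmetric]) simp
qed

lemma has_sum_shift_fst:
  fixes g :: "nat \<times> nat \<Rightarrow> 'a::real_normed_vector"
  assumes "\<And>j. g (0, j) = 0"
  shows "(g has_sum s) UNIV \<longleftrightarrow> ((\<lambda>(i,j). g (Suc i, j)) has_sum s) UNIV"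
proof -
  let ?h = "\<lambda>(i::nat,j::nat). (Suc i, j)"
  have inj: "inj ?h" by (auto simp: inj_on_def)
  have "(g has_sum s) UNIV \<longleftrightarrow> (g has_sum s) (range ?h)"
  proof (rule has_sum_cong_neutral)
    fix x assume "x \<in> UNIV - range ?h"
    then obtain j where "x = (0, j)"
      by (cases x) (metis (no_types, lifting) DiffD2 case_prod_conv not0_implies_Suc rangeI)
    then show "g x = 0" using assms by simp
  qed auto
  also have "\<dots> \<longleftrightarrow> ((g \<circ> ?h) has_sum s) UNIV" by (rule has_sum_reindex[OF inj])
  also have "g \<circ> ?h = (\<lambda>(i,j). g (Suc i, j))" by (auto simp: fun_eq_iff)
  finally show ?thesis .
qed

lemma has_sum_shift_snd:
  fixes g :: "nat \<times> nat \<Rightarrow> 'a::real_normed_vector"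
  assumes "\<And>i. g (i, 0) = 0"
  shows "(g has_sum s) UNIV \<longleftrightarrow> ((\<lambda>(i,j). g (i, Suc j)) has_sum s) UNIV"
proof -
  let ?h = "\<lambda>(i::nat,j::nat). (i, Suc j)"
  have inj: "inj ?h" by (auto simp: inj_on_def)
  have "(g has_sum s) UNIV \<longleftrightarrow> (g has_sum s) (range ?h)"
  proof (rule has_sum_cong_neutral)
    fix x assume "x \<in> UNIV - range ?h"
    then obtain i where "x = (i, 0)"
      by (cases x) (metis (no_types, lifting) DiffD2 case_prod_conv not0_implies_Suc rangeI)
    then show "g x = 0" using assms by simp
  qed auto
  also have "\<dots> \<longleftrightarrow> ((g \<circ> ?h) has_sum s) UNIV" by (rule has_sum_reindex[OF inj])
  also have "g \<circ> ?h = (\<lambda>(i,j). g (i, Suc j))" by (auto simp: fun_eq_iff)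
  finally show ?thesis .
qed


lemma term_deriv:
  fixes a :: "'a::real_normed_vector"
  shows "((\<lambda>z. ((Re z - Re p)^i * (Im z - Im p)^j) *\<^sub>R a) has_derivative
     (\<lambda>h. Re h *\<^sub>R ((real i * (Re z - Re p)^(i-1) * (Im z - Im p)^j) *\<^sub>R a)
        + Im h *\<^sub>R ((real j * (Re z - Re p)^i * (Im z - Im p)^(j-1)) *\<^sub>R a))) (at z within S)"
proof -
  have dx: "((\<lambda>z. Re z - Re p) has_derivative (\<lambda>h. Re h)) (at z within S)"
    using has_derivative_diff[OF has_derivative_Re[OF has_derivative_ident] has_derivative_const] by simp
  have dy: "((\<lambda>z. Im z - Im p) has_derivative (\<lambda>h. Im h)) (at z within S)"
    using has_derivative_diff[OF has_derivative_Im[OF has_derivative_ident] has_derivative_const] by simp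
  have "((\<lambda>z. (Re z - Re p)^i * (Im z - Im p)^j) has_derivative
     (\<lambda>h. (Re z - Re p)^i * (of_nat j * Im h * (Im z - Im p)^(j-1)) + of_nat i * Re h * (Re z - Re p)^(i-1) * (Im z - Im p)^j)) (at z within S)"
    by (rule has_derivative_mult[OF has_derivative_power[OF dx] has_derivative_power[OF dy]])
  from has_derivative_scaleR_left[OF this, of a] show ?thesis
    by (rule has_derivative_eq_rhs) (simp add: fun_eq_iff algebra_simps scaleR_add_left)
qed

lemma ps_deriv:
  fixes c :: "nat \<Rightarrow> nat \<Rightarrow> 'a::banach" and f :: "complex \<Rightarrow> 'a"
  assumes e: "e > 0" and hs: "\<And>z. z \<in> ball p e \<Longrightarrow> (pst c p z has_sum f z) UNIV"
  shows "\<exists>d>0. \<forall>z\<in>ball p d. pst (dcx c) p z summable_on UNIV \<and> pst (dcy c) p z summable_on UNIV \<and>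
     (f has_derivative (\<lambda>h. Re h *\<^sub>R infsum (pst (dcx c) p z) UNIV + Im h *\<^sub>R infsum (pst (dcy c) p z) UNIV)) (at z)"
proof -
  define \<rho> where "\<rho> = e / 2"
  have \<rho>: "\<rho> > 0" using e by (simp add: \<rho>_def)
  define z1 where "z1 = p + Complex \<rho> \<rho>"
  have "cmod (Complex \<rho> \<rho>) < e"
  proof -
    have "cmod (Complex \<rho> \<rho>) = sqrt (2 * \<rho>^2)" by (simp add: cmod_def power2_eq_square)
    also have "\<dots> < sqrt ((2*\<rho>)^2)" using \<rho> by (simp add: power2_eq_square)
    also have "\<dots> = e" using e by (simp add: \<rho>_def)
    finally show ?thesis .
  qed
  then have "z1 \<in> ball p e" by (simp add: z1_def dist_norm)
  then obtain B0 where B0: "\<And>k. norm (pst c p z1 k) \<le> B0"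
    using has_sum_bounded_terms[OF hs] by blast
  have cb: "norm (c i j) * (\<rho>^i * \<rho>^j) \<le> B0" for i j
    using B0[of "(i,j)"] \<rho> by (simp add: pst_def z1_def mult.commute)
  define d where "d = \<rho> / 2"
  have d: "d > 0" "d < e" using \<rho> by (auto simp: d_def \<rho>_def)
  define q :: real where "q = 1/2"
  define S where "S = ball p d"
  have xy_bd: "\<bar>Re z - Re p\<bar> \<le> d" "\<bar>Im z - Im p\<bar> \<le> d" if "z \<in> S" for z
  proof -
    have "cmod (z - p) < d" using that by (simp add: S_def dist_norm norm_minus_commute)
    then show "\<bar>Re z - Re p\<bar> \<le> d" "\<bar>Im z - Im p\<bar> \<le> d"
      using abs_Re_le_cmod[of "z - p"] abs_Im_le_cmod[of "z - p"] by auto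
  qed
  define Dx where "Dx z = (\<lambda>(i,j). (real i * (Re z - Re p)^(i-1) * (Im z - Im p)^j) *\<^sub>R c i j)" for z
  define Dy where "Dy z = (\<lambda>(i,j). (real j * (Re z - Re p)^i * (Im z - Im p)^(j-1)) *\<^sub>R c i j)" for z
  define Mx where "Mx = (\<lambda>k. (B0/\<rho>) * (\<lambda>(i,j). (real i * q^(i-1)) * q^j) k)"
  define My where "My = (\<lambda>k. (B0/\<rho>) * (\<lambda>(i,j). q^i * (real j * q^(j-1))) k)"
  have dq: "d^k = q^k * \<rho>^k" for k by (simp add: d_def q_def power_divide)
  have cb': "\<rho>^k * \<rho>^j * norm (c i j) \<le> B0/\<rho>" if "i = Suc k" for i j k
  proof -
    have eq: "norm (c i j) * (\<rho>^i * \<rho>^j) = (\<rho>^k * \<rho>^j * norm (c i j)) * \<rho>" unfolding that by (simp add: algebra_simps)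
    show ?thesis using cb[of i j] \<rho> eq by (simp add: pos_le_divide_eq)
  qed
  have bx: "norm (Dx z k) \<le> Mx k" if z: "z \<in> S" for z k
  proof (cases k)
    case (Pair i j)
    show ?thesis
    proof (cases i)
      case 0 then show ?thesis using Pair by (simp add: Dx_def Mx_def)
    next
      case (Suc m)
      have "norm (Dx z k) = real i * (\<bar>Re z - Re p\<bar>^m * \<bar>Im z - Im p\<bar>^j * norm (c i j))"
        using Pair Suc by (simp add: Dx_def abs_mult power_abs)
      also have "\<dots> \<le> real i * (d^m * d^j * norm (c i j))"
        using xy_bd[OF z] by (intro mult_left_mono mult_right_mono mult_mono power_mono) auto
      also have "\<dots> = real i * (q^m * q^j * (\<rho>^m * \<rho>^j * norm (c i j)))" by (simp add: dq algebra_simps)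
      also have "\<dots> \<le> real i * (q^m * q^j * (B0/\<rho>))"
        using cb'[OF Suc, of j] by (intro mult_left_mono) (auto simp: q_def)
      also have "\<dots> = Mx k" using Pair Suc by (simp add: Mx_def algebra_simps)
      finally show ?thesis .
    qed
  qed
  have by': "norm (Dy z k) \<le> My k" if z: "z \<in> S" for z k
  proof (cases k)
    case (Pair i j)
    show ?thesis
    proof (cases j)
      case 0 then show ?thesis using Pair by (simp add: Dy_def My_def)
    next
      case (Suc m)
      have cbj: "\<rho>^i * \<rho>^m * norm (c i j) \<le> B0/\<rho>"
      proof -
        have eq: "norm (c i j) * (\<rho>^i * \<rho>^j) = (\<rho>^i * \<rho>^m * norm (c i j)) * \<rho>" unfolding Suc by (simp add: algebra_simps)
        show ?thesis using cb[of i j] \<rho> eq by (simp add: pos_le_divide_eq)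
      qed
      have "norm (Dy z k) = real j * (\<bar>Re z - Re p\<bar>^i * \<bar>Im z - Im p\<bar>^m * norm (c i j))"
        using Pair Suc by (simp add: Dy_def abs_mult power_abs)
      also have "\<dots> \<le> real j * (d^i * d^m * norm (c i j))"
        using xy_bd[OF z] by (intro mult_left_mono mult_right_mono mult_mono power_mono) auto
      also have "\<dots> = real j * (q^i * q^m * (\<rho>^i * \<rho>^m * norm (c i j)))" by (simp add: dq algebra_simps)
      also have "\<dots> \<le> real j * (q^i * q^m * (B0/\<rho>))"
        using cbj by (intro mult_left_mono) (auto simp: q_def)
      also have "\<dots> = My k" using Pair Suc by (simp add: My_def algebra_simps)
      finally show ?thesis .
    qed
  qed
  have sa: "summable (\<lambda>i. real i * q ^ (i - 1))" by (rule summable_n_geom) (auto simp: q_def)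
  have sg: "summable (\<lambda>i. q ^ i)" by (rule summable_geometric) (simp add: q_def)
  have Mx_s: "Mx summable_on UNIV"
    unfolding Mx_def
    by (intro summable_on_cmult_right summable_on_prod_nat sa sg) (auto simp: q_def)
  have My_s: "My summable_on UNIV"
    unfolding My_def
    by (intro summable_on_cmult_right summable_on_prod_nat sa sg) (auto simp: q_def)
  have Dx_summ: "\<And>z. z\<in>S \<Longrightarrow> Dx z summable_on UNIV"
    using unif_sq_summable[where M=Mx and S=S and t=Dx] Mx_s bx by blast
  have Dx_conv: "\<And>e. e>0 \<Longrightarrow> \<forall>\<^sub>F n in sequentially. \<forall>z\<in>S. norm (sum (Dx z) (sq n) - infsum (Dx z) UNIV) \<le> e"
    using unif_sq_conv[where M=Mx and S=S and t=Dx] Mx_s bx by blast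
  have Dy_summ: "\<And>z. z\<in>S \<Longrightarrow> Dy z summable_on UNIV"
    using unif_sq_summable[where M=My and S=S and t=Dy] My_s by' by blast
  have Dy_conv: "\<And>e. e>0 \<Longrightarrow> \<forall>\<^sub>F n in sequentially. \<forall>z\<in>S. norm (sum (Dy z) (sq n) - infsum (Dy z) UNIV) \<le> e"
    using unif_sq_conv[where M=My and S=S and t=Dy] My_s by' by blast
  define fN where "fN n z = sum (pst c p z) (sq n)" for n z
  define fN' where "fN' n z h = Re h *\<^sub>R sum (Dx z) (sq n) + Im h *\<^sub>R sum (Dy z) (sq n)" for n z h
  define g' where "g' z h = Re h *\<^sub>R infsum (Dx z) UNIV + Im h *\<^sub>R infsum (Dy z) UNIV" for z h
  have derf: "(fN n has_derivative fN' n z) (at z within S)" for n z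
  proof -
    have "((\<lambda>z. \<Sum>k\<in>sq n. pst c p z k) has_derivative (\<lambda>h. \<Sum>k\<in>sq n. Re h *\<^sub>R Dx z k + Im h *\<^sub>R Dy z k)) (at z within S)"
    proof (rule has_derivative_sum)
      fix k assume "k \<in> sq n"
      obtain i j where k: "k = (i,j)" by (cases k)
      show "((\<lambda>z. pst c p z k) has_derivative (\<lambda>h. Re h *\<^sub>R Dx z k + Im h *\<^sub>R Dy z k)) (at z within S)"
        using term_deriv[of p i j "c i j" z S] by (simp add: k pst_def Dx_def Dy_def)
    qed
    then show ?thesis
      unfolding fN_def fN'_def by (rule has_derivative_eq_rhs) (simp add: fun_eq_iff sum.distrib scaleR_sum_right)
  qed
  have nle: "\<forall>\<^sub>F n in sequentially. \<forall>z\<in>S. \<forall>h. norm (fN' n z h - g' z h) \<le> \<epsilon> * norm h" if "\<epsilon> > 0" for \<epsilon>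
  proof -
    have "\<epsilon>/2 > 0" using that by simp
    from eventually_conj[OF Dx_conv[OF this] Dy_conv[OF this]]
    show ?thesis
    proof eventually_elim
      case (elim n)
      show ?case
      proof (intro ballI allI)
        fix z h assume z: "z \<in> S"
        have "fN' n z h - g' z h = Re h *\<^sub>R (sum (Dx z) (sq n) - infsum (Dx z) UNIV) + Im h *\<^sub>R (sum (Dy z) (sq n) - infsum (Dy z) UNIV)"
          by (simp add: fN'_def g'_def algebra_simps)
        also have "norm \<dots> \<le> \<bar>Re h\<bar> * norm (sum (Dx z) (sq n) - infsum (Dx z) UNIV) + \<bar>Im h\<bar> * norm (sum (Dy z) (sq n) - infsum (Dy z) UNIV)"
          by (rule order_trans[OF norm_triangle_ineq]) simp
        also have "\<dots> \<le> norm h * (\<epsilon>/2) + norm h * (\<epsilon>/2)"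
          using elim z abs_Re_le_cmod[of h] abs_Im_le_cmod[of h]
          by (intro add_mono mult_mono) auto
        finally show "norm (fN' n z h - g' z h) \<le> \<epsilon> * norm h" by (simp add: algebra_simps)
      qed
    qed
  qed
  have pS: "p \<in> S" using d by (simp add: S_def)
  have SE: "S \<subseteq> ball p e" using d by (auto simp: S_def)
  have lim: "(\<lambda>n. fN n z) \<longlonglongrightarrow> f z" if "z \<in> S" for z
    unfolding fN_def using SE that by (intro has_sum_sq_tendsto hs) auto
  obtain g where g: "\<And>z. z \<in> S \<Longrightarrow> (\<lambda>n. fN n z) \<longlonglongrightarrow> g z \<and> (g has_derivative g' z) (at z within S)"
    using has_derivative_sequence[OF convex_ball[of p d, folded S_def] derf nle pS lim[OF pS]] by blast
  have fg: "f z = g z" if "z \<in> S" for z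
    using LIMSEQ_unique[OF lim[OF that]] g[OF that] by blast
  have S_open: "open S" by (simp add: S_def)
  have fd: "(f has_derivative g' z) (at z)" if z: "z \<in> S" for z
  proof -
    have "(g has_derivative g' z) (at z)" using g[OF z] at_within_open[OF z S_open] by simp
    then show ?thesis by (rule has_derivative_transform_within_open[OF _ S_open z]) (simp add: fg)
  qed
  have ex: "(pst (dcx c) p z has_sum infsum (Dx z) UNIV) UNIV" if z: "z \<in> S" for z
  proof -
    have "(Dx z has_sum infsum (Dx z) UNIV) UNIV" using Dx_summ[OF z] by simp
    then have "((\<lambda>(i,j). Dx z (Suc i, j)) has_sum infsum (Dx z) UNIV) UNIV"
      by (subst (asm) has_sum_shift_fst) (simp_all add: Dx_def)
    moreover have "(\<lambda>(i,j). Dx z (Suc i, j)) = pst (dcx c) p z"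
      by (simp add: fun_eq_iff Dx_def pst_def dcx_def)
    ultimately show ?thesis by simp
  qed
  have ey: "(pst (dcy c) p z has_sum infsum (Dy z) UNIV) UNIV" if z: "z \<in> S" for z
  proof -
    have "(Dy z has_sum infsum (Dy z) UNIV) UNIV" using Dy_summ[OF z] by simp
    then have "((\<lambda>(i,j). Dy z (i, Suc j)) has_sum infsum (Dy z) UNIV) UNIV"
      by (subst (asm) has_sum_shift_snd) (simp_all add: Dy_def)
    moreover have "(\<lambda>(i,j). Dy z (i, Suc j)) = pst (dcy c) p z"
      by (simp add: fun_eq_iff Dy_def pst_def dcy_def)
    ultimately show ?thesis by simp
  qed
  show ?thesis
  proof (intro exI[of _ d] conjI ballI d(1))
    fix z assume z: "z \<in> ball p d"
    then have z': "z \<in> S" by (simp add: S_def)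
    show "pst (dcx c) p z summable_on UNIV" using ex[OF z'] by (auto simp: summable_on_def)
    show "pst (dcy c) p z summable_on UNIV" using ey[OF z'] by (auto simp: summable_on_def)
    have "infsum (pst (dcx c) p z) UNIV = infsum (Dx z) UNIV" using ex[OF z'] by (rule infsumI)
    moreover have "infsum (pst (dcy c) p z) UNIV = infsum (Dy z) UNIV" using ey[OF z'] by (rule infsumI)
    ultimately show "(f has_derivative (\<lambda>h. Re h *\<^sub>R infsum (pst (dcx c) p z) UNIV + Im h *\<^sub>R infsum (pst (dcy c) p z) UNIV)) (at z)"
    proof -
      have "g' z = (\<lambda>h. Re h *\<^sub>R infsum (Dx z) UNIV + Im h *\<^sub>R infsum (Dy z) UNIV)" by (simp add: fun_eq_iff g'_def)
      then show ?thesis using fd[OF z'] by (simp add: \<open>infsum (pst (dcx c) p z) UNIV = infsum (Dx z) UNIV\<close> \<open>infsum (pst (dcy c) p z) UNIV = infsum (Dy z) UNIV\<close>)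
    qed
  qed
qed



lemma cr_self: "cr a a = 0"
  by (simp add: vec7_eq cr_comp)

lemma bb_cr: "bounded_bilinear cr"
proof (unfold_locales)
  show "cr (a + a') b = cr a b + cr a' b" for a a' b by (rule cr_add_left)
  show "cr a (b + b') = cr a b + cr a b'" for a b b' by (rule cr_add_right)
  show "cr (r *\<^sub>R a) b = r *\<^sub>R cr a b" for r a b by (rule cr_scale_left)
  show "cr a (r *\<^sub>R b) = r *\<^sub>R cr a b" for r a b by (rule cr_scale_right)
  show "\<exists>K. \<forall>a b. norm (cr a b) \<le> norm a * norm b * K"
  proof (intro exI allI)
    fix a b
    have "(norm (cr a b))^2 = cr a b \<bullet> cr a b" by (rule power2_norm_eq_inner)
    also have "\<dots> = (a \<bullet> a) * (b \<bullet> b) - (a \<bullet> b)^2" by (rule cr_norm2)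
    also have "\<dots> \<le> (a \<bullet> a) * (b \<bullet> b)" by simp
    also have "\<dots> = (norm a)^2 * (norm b)^2" by (simp only: power2_norm_eq_inner)
    also have "\<dots> = (norm a * norm b)^2" by (rule power_mult_distrib[symmetric])
    finally have "(norm (cr a b))^2 \<le> (norm a * norm b)^2" .
    then have "norm (cr a b) \<le> norm a * norm b"
      by (rule power2_le_imp_le) simp
    then show "norm (cr a b) \<le> norm a * norm b * 1" by simp
  qed
qed

lemma J_lemma:
  assumes uu: "u \<bullet> u = 1" and uS: "u \<bullet> S = 0" and uT: "u \<bullet> T = 0" and ST: "S \<bullet> T = 0"
    and nST: "norm S = norm T" and G: "G2phi u S T = vol3 u S T"
  shows "T = cr u S"
proof -
  have SS: "T \<bullet> T = S \<bullet> S" using nST by (metis power2_norm_eq_inner)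
  have "vol3 u S T = sqrt ((S \<bullet> S) * (S \<bullet> S))"
    unfolding vol3_def using uu uS uT ST SS by (simp add: inner_commute)
  also have "\<dots> = S \<bullet> S" by simp
  finally have vol: "vol3 u S T = S \<bullet> S" .
  have G': "cr u S \<bullet> T = S \<bullet> S" using G vol by (simp add: G2phi_cr)
  have n: "cr u S \<bullet> cr u S = S \<bullet> S" using cr_norm2[of u S] uu uS by simp
  have "(cr u S - T) \<bullet> (cr u S - T) = 0"
    by (simp add: inner_diff_left inner_diff_right inner_commute[of T "cr u S"] G' n SS)
  then show ?thesis by simp
qed

lemma fin_lemma:
  assumes uu: "u \<bullet> u = 1"
  shows "G2phi u A (cr u A + k *\<^sub>R u) = vol3 u A (cr u A + k *\<^sub>R u)"
proof -
  define B where "B = cr u A + k *\<^sub>R u"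
  define p where "p = u \<bullet> A"
  define m where "m = A \<bullet> A - p^2"
  have n: "cr u A \<bullet> cr u A = m" using cr_norm2[of u A] uu by (simp add: m_def p_def)
  have m0: "m \<ge> 0" using n by (metis inner_ge_zero)
  have c1: "cr u A \<bullet> u = 0" by (rule cr_self1)
  have c2: "cr u A \<bullet> A = 0" by (rule cr_self2)
  have uB: "u \<bullet> B = k" using c1 uu by (simp add: B_def inner_add_right inner_commute)
  have AB: "A \<bullet> B = k * p" using c2 by (simp add: B_def inner_add_right inner_commute p_def)
  have BB: "B \<bullet> B = m + k^2" using c1 n uu
    by (simp add: B_def inner_add_right inner_add_left inner_commute power2_eq_square)
  have AA: "A \<bullet> A = m + p^2" by (simp add: m_def)
  have G: "G2phi u A B = m" using n c1 by (simp add: G2phi_cr B_def inner_add_right)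
  have "vol3 u A B = sqrt (1 * ((m + p^2) * (m + k^2) - (k*p) * (k*p)) - p * (p * (m + k^2) - (k*p) * k) + k * (p * (k*p) - (m + p^2) * k))"
    unfolding vol3_def using uu uB AB BB AA
    by (simp add: inner_commute[of B u] inner_commute[of B A] inner_commute[of A u] p_def)
  also have "\<dots> = sqrt (m^2)"
    by (rule arg_cong[where f=sqrt]) (simp add: algebra_simps power2_eq_square)
  also have "\<dots> = m" using m0 by simp
  finally show ?thesis using G by (simp add: B_def)
qed

lemma final_alg:
  assumes uu: "u \<bullet> u = 1" and uS: "u \<bullet> S = 0" and T: "T = cr u S" and X: "X = cr u Y"
    and Z: "Z = cr u X + cr T S"
  shows "r *\<^sub>R T + ((a *\<^sub>R X + (-q) *\<^sub>R S) + (b *\<^sub>R Z + p *\<^sub>R T))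
       = cr u (r *\<^sub>R S + ((a *\<^sub>R Y + p *\<^sub>R S) + (b *\<^sub>R X + q *\<^sub>R T))) + (- b * (S \<bullet> S)) *\<^sub>R u"
proof -
  have h1: "cr u T = - S" using cr_double[of u S] uu uS T by simp
  have h2: "cr T S = - (S \<bullet> S) *\<^sub>R u"
  proof -
    have "cr T S = - cr S T" by (rule cr_anti)
    also have "cr S T = - cr S (cr S u)" using T cr_anti[of u S] by (simp add: cr_scale_right[of _ "-1", simplified])
    also have "cr S (cr S u) = (S \<bullet> u) *\<^sub>R S - (S \<bullet> S) *\<^sub>R u" by (rule cr_double)
    finally show ?thesis using uS by (simp add: inner_commute)
  qed
  have "cr u (r *\<^sub>R S + ((a *\<^sub>R Y + p *\<^sub>R S) + (b *\<^sub>R X + q *\<^sub>R T)))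
     = r *\<^sub>R T + ((a *\<^sub>R X + p *\<^sub>R T) + (b *\<^sub>R cr u X + q *\<^sub>R (- S)))"
    by (simp add: cr_add_right cr_scale_right T[symmetric] X[symmetric] h1)
  moreover have Z': "Z = cr u X - (S \<bullet> S) *\<^sub>R u" using Z h2 by simp
  ultimately show ?thesis unfolding Z' by (simp add: algebra_simps)
qed

theorem proposition6p8:
  fixes \<phi> :: "complex \<Rightarrow> real^7" and w :: "complex \<Rightarrow> complex" and U :: "complex set"
  assumes U_open: "open U"
    and analytic: "real_analytic_on \<phi> U"
    and sphere: "\<forall>z\<in>U. norm (\<phi> z) = 1"
    and conformal: "\<forall>z\<in>U. frechet_derivative \<phi> (at z) 1 \<bullet> frechet_derivative \<phi> (at z) \<i> = 0
                        \<and> norm (frechet_derivative \<phi> (at z) 1) = norm (frechet_derivative \<phi> (at z) \<i>)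
                        \<and> frechet_derivative \<phi> (at z) 1 \<noteq> 0"
    and oriented: "\<forall>z\<in>U. G2phi (\<phi> z) (frechet_derivative \<phi> (at z) 1) (frechet_derivative \<phi> (at z) \<i>) > 0"
    and cone_assoc: "associative_param (\<lambda>(r, z). r *\<^sub>R \<phi> z) (UNIV \<times> U)"
    and holo: "w holomorphic_on U"
  shows "associative_param (\<lambda>(r, z). r *\<^sub>R \<phi> z + lie_deriv w \<phi> z) (UNIV \<times> U)
       \<and> asymptotic_cone \<phi> (lie_deriv w \<phi>) U = ruled_set \<phi> (\<lambda>_. 0) U"
proof -
  define S where "S z = frechet_derivative \<phi> (at z) 1" for z
  define T where "T z = frechet_derivative \<phi> (at z) \<i>" for z
  have local: "\<exists>d>0. ball z0 d \<subseteq> U \<and> (\<exists>fx fy fxx fxy fyy.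
       (\<forall>z\<in>ball z0 d. (\<phi> has_derivative (\<lambda>h. Re h *\<^sub>R fx z + Im h *\<^sub>R fy z)) (at z)) \<and>
       (fx has_derivative (\<lambda>h. Re h *\<^sub>R fxx + Im h *\<^sub>R fxy)) (at z0) \<and>
       (fy has_derivative (\<lambda>h. Re h *\<^sub>R fxy + Im h *\<^sub>R fyy)) (at z0))" if z0: "z0 \<in> U" for z0
  proof -
    obtain e c where e: "e > 0" and hs: "\<And>z. z \<in> ball z0 e \<Longrightarrow> (pst c z0 z has_sum \<phi> z) UNIV"
      using analytic z0 unfolding real_analytic_on_def pst_def by blast
    obtain d1 where d1: "d1 > 0" and D1: "\<And>z. z \<in> ball z0 d1 \<Longrightarrow> pst (dcx c) z0 z summable_on UNIV \<and> pst (dcy c) z0 z summable_on UNIV \<and>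
      (\<phi> has_derivative (\<lambda>h. Re h *\<^sub>R infsum (pst (dcx c) z0 z) UNIV + Im h *\<^sub>R infsum (pst (dcy c) z0 z) UNIV)) (at z)"
      using ps_deriv[OF e hs] by blast
    define fx where "fx z = infsum (pst (dcx c) z0 z) UNIV" for z
    define fy where "fy z = infsum (pst (dcy c) z0 z) UNIV" for z
    have hx: "\<And>z. z \<in> ball z0 d1 \<Longrightarrow> (pst (dcx c) z0 z has_sum fx z) UNIV" using D1 by (simp add: fx_def)
    have hy: "\<And>z. z \<in> ball z0 d1 \<Longrightarrow> (pst (dcy c) z0 z has_sum fy z) UNIV" using D1 by (simp add: fy_def)
    obtain d2 where d2: "d2 > 0" and D2: "\<And>z. z \<in> ball z0 d2 \<Longrightarrow> pst (dcx (dcx c)) z0 z summable_on UNIV \<and> pst (dcy (dcx c)) z0 z summable_on UNIV \<and>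
      (fx has_derivative (\<lambda>h. Re h *\<^sub>R infsum (pst (dcx (dcx c)) z0 z) UNIV + Im h *\<^sub>R infsum (pst (dcy (dcx c)) z0 z) UNIV)) (at z)"
      using ps_deriv[OF d1 hx] by blast
    obtain d3 where d3: "d3 > 0" and D3: "\<And>z. z \<in> ball z0 d3 \<Longrightarrow> pst (dcx (dcy c)) z0 z summable_on UNIV \<and> pst (dcy (dcy c)) z0 z summable_on UNIV \<and>
      (fy has_derivative (\<lambda>h. Re h *\<^sub>R infsum (pst (dcx (dcy c)) z0 z) UNIV + Im h *\<^sub>R infsum (pst (dcy (dcy c)) z0 z) UNIV)) (at z)"
      using ps_deriv[OF d1 hy] by blast
    obtain r where r: "r > 0" "ball z0 r \<subseteq> U" using U_open z0 open_contains_ball by blast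
    define d where "d = min d1 r"
    have fxd: "(fx has_derivative (\<lambda>h. Re h *\<^sub>R infsum (pst (dcx (dcx c)) z0 z0) UNIV + Im h *\<^sub>R infsum (pst (dcy (dcx c)) z0 z0) UNIV)) (at z0)"
      using D2[of z0] d2 by simp
    have fyd: "(fy has_derivative (\<lambda>h. Re h *\<^sub>R infsum (pst (dcy (dcx c)) z0 z0) UNIV + Im h *\<^sub>R infsum (pst (dcy (dcy c)) z0 z0) UNIV)) (at z0)"
      using D3[of z0] d3 by (simp add: dcx_dcy)
    have phd: "\<forall>z\<in>ball z0 d. (\<phi> has_derivative (\<lambda>h. Re h *\<^sub>R fx z + Im h *\<^sub>R fy z)) (at z)"
      using D1 by (simp add: d_def fx_def fy_def)
    show ?thesis
    proof (intro exI[of _ d] conjI)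
      show "d > 0" using r d1 by (simp add: d_def)
      show "ball z0 d \<subseteq> U" using r by (auto simp: d_def)
      show "\<exists>fx fy fxx fxy fyy.
       (\<forall>z\<in>ball z0 d. (\<phi> has_derivative (\<lambda>h. Re h *\<^sub>R fx z + Im h *\<^sub>R fy z)) (at z)) \<and>
       (fx has_derivative (\<lambda>h. Re h *\<^sub>R fxx + Im h *\<^sub>R fxy)) (at z0) \<and>
       (fy has_derivative (\<lambda>h. Re h *\<^sub>R fxy + Im h *\<^sub>R fyy)) (at z0)"
        by (intro exI[of _ fx] exI[of _ fy] exI[of _ "infsum (pst (dcx (dcx c)) z0 z0) UNIV"]
            exI[of _ "infsum (pst (dcy (dcx c)) z0 z0) UNIV"] exI[of _ "infsum (pst (dcy (dcy c)) z0 z0) UNIV"] conjI phd fxd fyd)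
    qed
  qed
  have SD: "S z = fx z \<and> T z = fy z \<and> (\<phi> has_derivative (\<lambda>h. Re h *\<^sub>R S z + Im h *\<^sub>R T z)) (at z)"
    if "(\<phi> has_derivative (\<lambda>h. Re h *\<^sub>R fx z + Im h *\<^sub>R fy z)) (at z)" for z fx fy
  proof -
    have "frechet_derivative \<phi> (at z) = (\<lambda>h. Re h *\<^sub>R fx z + Im h *\<^sub>R fy z)"
      using that by (rule frechet_derivative_at[symmetric])
    then have "S z = fx z" "T z = fy z" by (simp_all add: S_def T_def)
    with that show ?thesis by simp
  qed
  have Dphi: "(\<phi> has_derivative (\<lambda>h. Re h *\<^sub>R S z + Im h *\<^sub>R T z)) (at z)" if z: "z \<in> U" for z
  proof -
    obtain d fx fy where "d > 0" and L: "\<forall>z'\<in>ball z d. (\<phi> has_derivative (\<lambda>h. Re h *\<^sub>R fx z' + Im h *\<^sub>R fy z')) (at z')"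
      using local[OF z] by blast
    then have "(\<phi> has_derivative (\<lambda>h. Re h *\<^sub>R fx z + Im h *\<^sub>R fy z)) (at z)" by simp
    then show ?thesis using SD by blast
  qed
  have FD: "frechet_derivative \<phi> (at z) = (\<lambda>h. Re h *\<^sub>R S z + Im h *\<^sub>R T z)" if "z \<in> U" for z
    using Dphi[OF that] by (rule frechet_derivative_at[symmetric])
  have uu: "\<phi> z \<bullet> \<phi> z = 1" if "z \<in> U" for z
    using sphere that by (metis power2_norm_eq_inner power_one)
  have orth: "\<phi> z \<bullet> S z = 0 \<and> \<phi> z \<bullet> T z = 0" if z: "z \<in> U" for z
  proof -
    have d1: "((\<lambda>z. \<phi> z \<bullet> \<phi> z) has_derivative (\<lambda>h. \<phi> z \<bullet> (Re h *\<^sub>R S z + Im h *\<^sub>R T z) + (Re h *\<^sub>R S z + Im h *\<^sub>R T z) \<bullet> \<phi> z)) (at z)"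
      using has_derivative_inner[OF Dphi[OF z] Dphi[OF z]] by simp
    have "((\<lambda>z. 1::real) has_derivative (\<lambda>h. 0)) (at z)" by simp
    then have d2: "((\<lambda>z. \<phi> z \<bullet> \<phi> z) has_derivative (\<lambda>h. 0)) (at z)"
      by (rule has_derivative_transform_within_open[OF _ U_open z]) (simp add: uu)
    have E: "\<phi> z \<bullet> (Re h *\<^sub>R S z + Im h *\<^sub>R T z) + (Re h *\<^sub>R S z + Im h *\<^sub>R T z) \<bullet> \<phi> z = 0" for h
      using fun_cong[OF has_derivative_unique[OF d1 d2], of h] by simp
    from E[of 1] E[of \<i>] show ?thesis
      by (simp add: inner_commute[of "S z" "\<phi> z"] inner_commute[of "T z" "\<phi> z"])
  qed
  have cone_d: "((\<lambda>x. fst x *\<^sub>R \<phi> (snd x)) has_derivative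
      (\<lambda>v. fst v *\<^sub>R \<phi> z + r *\<^sub>R (Re (snd v) *\<^sub>R S z + Im (snd v) *\<^sub>R T z))) (at (r, z))" if z: "z \<in> U" for r z
  proof -
    have sd: "(snd has_derivative snd) (at (r, z))"
      using bounded_linear.has_derivative[OF bounded_linear_snd has_derivative_ident] by blast
    have fd: "(fst has_derivative fst) (at (r, z))"
      using bounded_linear.has_derivative[OF bounded_linear_fst has_derivative_ident] by blast
    have "(\<phi> has_derivative (\<lambda>h. Re h *\<^sub>R S z + Im h *\<^sub>R T z)) (at (snd (r, z)))" using Dphi[OF z] by simp
    from has_derivative_compose[OF sd this]
    have "((\<lambda>x. \<phi> (snd x)) has_derivative (\<lambda>v. Re (snd v) *\<^sub>R S z + Im (snd v) *\<^sub>R T z)) (at (r, z))" by simp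
    from has_derivative_scaleR[OF fd this] show ?thesis
      by (rule has_derivative_eq_rhs) (simp add: fun_eq_iff)
  qed
  have JH: "T z = cr (\<phi> z) (S z)" if z: "z \<in> U" for z
  proof -
    have eqc: "(\<lambda>(r, z). r *\<^sub>R \<phi> z) = (\<lambda>x. fst x *\<^sub>R \<phi> (snd x))" by (simp add: fun_eq_iff)
    have "frechet_derivative (\<lambda>x. fst x *\<^sub>R \<phi> (snd x)) (at (1, z)) =
      (\<lambda>v. fst v *\<^sub>R \<phi> z + 1 *\<^sub>R (Re (snd v) *\<^sub>R S z + Im (snd v) *\<^sub>R T z))"
      using cone_d[OF z] by (rule frechet_derivative_at[symmetric])
    moreover have "G2phi (frechet_derivative (\<lambda>x. fst x *\<^sub>R \<phi> (snd x)) (at (1, z)) (1, 0))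
        (frechet_derivative (\<lambda>x. fst x *\<^sub>R \<phi> (snd x)) (at (1, z)) (0, 1))
        (frechet_derivative (\<lambda>x. fst x *\<^sub>R \<phi> (snd x)) (at (1, z)) (0, \<i>))
      = vol3 (frechet_derivative (\<lambda>x. fst x *\<^sub>R \<phi> (snd x)) (at (1, z)) (1, 0))
        (frechet_derivative (\<lambda>x. fst x *\<^sub>R \<phi> (snd x)) (at (1, z)) (0, 1))
        (frechet_derivative (\<lambda>x. fst x *\<^sub>R \<phi> (snd x)) (at (1, z)) (0, \<i>))"
      using bspec[OF cone_assoc[unfolded associative_param_def eqc], of "(1, z)"] z by blast
    ultimately have G: "G2phi (\<phi> z) (S z) (T z) = vol3 (\<phi> z) (S z) (T z)" by simp
    show ?thesis
      using J_lemma[OF uu[OF z] conjunct1[OF orth[OF z]] conjunct2[OF orth[OF z]] _ _ G] conformal z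
      by (simp add: S_def T_def)
  qed
  define F where "F x = fst x *\<^sub>R \<phi> (snd x) + lie_deriv w \<phi> (snd x)" for x
  have main: "\<exists>L. (F has_derivative L) (at (r0, z0)) \<and> G2phi (L (1, 0)) (L (0, 1)) (L (0, \<i>)) = vol3 (L (1, 0)) (L (0, 1)) (L (0, \<i>))"
    if z0: "z0 \<in> U" for r0 z0
  proof -
    obtain d fx fy fxx fxy fyy where d: "d > 0" "ball z0 d \<subseteq> U"
      and phd: "\<forall>z\<in>ball z0 d. (\<phi> has_derivative (\<lambda>h. Re h *\<^sub>R fx z + Im h *\<^sub>R fy z)) (at z)"
      and fxd: "(fx has_derivative (\<lambda>h. Re h *\<^sub>R fxx + Im h *\<^sub>R fxy)) (at z0)"
      and fyd: "(fy has_derivative (\<lambda>h. Re h *\<^sub>R fxy + Im h *\<^sub>R fyy)) (at z0)"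
      using local[OF z0] by blast
    have z0b: "z0 \<in> ball z0 d" using d by simp
    have SDb: "S z = fx z \<and> T z = fy z" if "z \<in> ball z0 d" for z using SD phd that by blast
    define u where "u = \<phi> z0"
    have S0: "S z0 = fx z0" and T0: "T z0 = fy z0" using SDb[OF z0b] by auto
    have JHb: "fy z = cr (\<phi> z) (fx z)" if "z \<in> ball z0 d" for z
      using JH[of z] SDb[OF that] d that by auto
    have "((\<lambda>z. cr (\<phi> z) (fx z)) has_derivative
        (\<lambda>h. cr (\<phi> z0) (Re h *\<^sub>R fxx + Im h *\<^sub>R fxy) + cr (Re h *\<^sub>R S z0 + Im h *\<^sub>R T z0) (fx z0))) (at z0)"
      by (rule bounded_bilinear.FDERIV[OF bb_cr Dphi[OF z0] fxd])
    then have fyd2: "(fy has_derivative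
        (\<lambda>h. cr (\<phi> z0) (Re h *\<^sub>R fxx + Im h *\<^sub>R fxy) + cr (Re h *\<^sub>R S z0 + Im h *\<^sub>R T z0) (fx z0))) (at z0)"
      by (rule has_derivative_transform_within_open[OF _ open_ball z0b]) (simp add: JHb)
    have E: "Re h *\<^sub>R fxy + Im h *\<^sub>R fyy = cr u (Re h *\<^sub>R fxx + Im h *\<^sub>R fxy) + cr (Re h *\<^sub>R S z0 + Im h *\<^sub>R T z0) (S z0)" for h
      using fun_cong[OF has_derivative_unique[OF fyd fyd2], of h] by (simp add: S0 u_def)
    have Xe: "fxy = cr u fxx" using E[of 1] by (simp add: cr_self)
    have Ze: "fyy = cr u fxy + cr (T z0) (S z0)" using E[of \<i>] by simp
    obtain w' where wd: "(w has_field_derivative w') (at z0)"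
      using holo U_open z0 by (meson holomorphic_on_open)
    have wd': "(w has_derivative (\<lambda>h. w' * h)) (at z0)"
      using wd by (simp add: has_field_derivative_def mult_commute_abs)
    define \<psi>' where "\<psi>' h = (Re (w z0) *\<^sub>R (Re h *\<^sub>R fxx + Im h *\<^sub>R fxy) + Re (w' * h) *\<^sub>R fx z0)
        + (Im (w z0) *\<^sub>R (Re h *\<^sub>R fxy + Im h *\<^sub>R fyy) + Im (w' * h) *\<^sub>R fy z0)" for h
    have "((\<lambda>z. Re (w z) *\<^sub>R fx z + Im (w z) *\<^sub>R fy z) has_derivative \<psi>') (at z0)"
      unfolding \<psi>'_def
      by (rule has_derivative_add[OF has_derivative_scaleR[OF has_derivative_Re[OF wd'] fxd]
                                    has_derivative_scaleR[OF has_derivative_Im[OF wd'] fyd]])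
    then have psid: "(lie_deriv w \<phi> has_derivative \<psi>') (at z0)"
    proof (rule has_derivative_transform_within_open[OF _ open_ball z0b])
      fix z assume z: "z \<in> ball z0 d"
      then have "z \<in> U" using d by auto
      then show "Re (w z) *\<^sub>R fx z + Im (w z) *\<^sub>R fy z = lie_deriv w \<phi> z"
        using SDb[OF z] by (simp add: lie_deriv_def FD)
    qed
    have sd: "(snd has_derivative snd) (at (r0, z0))"
      using bounded_linear.has_derivative[OF bounded_linear_snd has_derivative_ident] by blast
    have "(lie_deriv w \<phi> has_derivative \<psi>') (at (snd (r0, z0)))" using psid by simp
    from has_derivative_compose[OF sd this]
    have "((\<lambda>x. lie_deriv w \<phi> (snd x)) has_derivative (\<lambda>v. \<psi>' (snd v))) (at (r0, z0))" by simp
    from has_derivative_add[OF cone_d[OF z0] this]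
    have Fd: "(F has_derivative (\<lambda>v. (fst v *\<^sub>R \<phi> z0 + r0 *\<^sub>R (Re (snd v) *\<^sub>R S z0 + Im (snd v) *\<^sub>R T z0)) + \<psi>' (snd v))) (at (r0, z0))"
      by (simp add: F_def[abs_def])
    define Fs where "Fs = r0 *\<^sub>R S z0 + ((Re (w z0) *\<^sub>R fxx + Re w' *\<^sub>R S z0) + (Im (w z0) *\<^sub>R fxy + Im w' *\<^sub>R T z0))"
    define Ft where "Ft = r0 *\<^sub>R T z0 + ((Re (w z0) *\<^sub>R fxy + (- Im w') *\<^sub>R S z0) + (Im (w z0) *\<^sub>R fyy + Re w' *\<^sub>R T z0))"
    have uu0: "u \<bullet> u = 1" using uu[OF z0] by (simp add: u_def)
    have uS0: "u \<bullet> S z0 = 0" using orth[OF z0] by (simp add: u_def)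
    have Ft_eq: "Ft = cr u Fs + (- Im (w z0) * (S z0 \<bullet> S z0)) *\<^sub>R u"
      unfolding Ft_def Fs_def
      by (rule final_alg[OF uu0 uS0 JH[OF z0, folded u_def] Xe Ze])
    define L where "L v = (fst v *\<^sub>R \<phi> z0 + r0 *\<^sub>R (Re (snd v) *\<^sub>R S z0 + Im (snd v) *\<^sub>R T z0)) + \<psi>' (snd v)" for v :: "real \<times> complex"
    have FdL: "(F has_derivative L) (at (r0, z0))" using Fd by (simp add: L_def[abs_def])
    have e1: "L (1, 0) = u" by (simp add: L_def \<psi>'_def u_def)
    have e2: "L (0, 1) = Fs" by (simp add: L_def \<psi>'_def Fs_def S0 T0 algebra_simps)
    have e3: "L (0, \<i>) = Ft" by (simp add: L_def \<psi>'_def Ft_def S0 T0 algebra_simps)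
    have "G2phi (L (1, 0)) (L (0, 1)) (L (0, \<i>)) = vol3 (L (1, 0)) (L (0, 1)) (L (0, \<i>))"
      unfolding e1 e2 e3 Ft_eq by (rule fin_lemma[OF uu0])
    then show ?thesis using FdL by blast
  qed
  have Feq: "(\<lambda>(r, z). r *\<^sub>R \<phi> z + lie_deriv w \<phi> z) = F" by (simp add: fun_eq_iff F_def)
  have P1: "associative_param F (UNIV \<times> U)"
    unfolding associative_param_def
  proof (intro ballI conjI)
    fix x :: "real \<times> complex" assume x: "x \<in> UNIV \<times> U"
    obtain r0 z0 where xe: "x = (r0, z0)" by (cases x)
    with x have z0: "z0 \<in> U" by simp
    obtain L where L: "(F has_derivative L) (at (r0, z0))"
      and GL: "G2phi (L (1, 0)) (L (0, 1)) (L (0, \<i>)) = vol3 (L (1, 0)) (L (0, 1)) (L (0, \<i>))"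
      using main[OF z0] by blast
    show "F differentiable at x" using L xe by (auto simp: differentiable_def)
    have "frechet_derivative F (at x) = L" using L xe by (simp add: frechet_derivative_at[symmetric])
    then show "G2phi (frechet_derivative F (at x) (1, 0)) (frechet_derivative F (at x) (0, 1)) (frechet_derivative F (at x) (0, \<i>)) =
      vol3 (frechet_derivative F (at x) (1, 0)) (frechet_derivative F (at x) (0, 1)) (frechet_derivative F (at x) (0, \<i>))"
      using GL by simp
  qed
  have P2: "asymptotic_cone \<phi> (lie_deriv w \<phi>) U = ruled_set \<phi> (\<lambda>_. 0) U"
    by (simp add: asymptotic_cone_def ruled_set_def)
  show ?thesis using P1 P2 Feq by simp
qed

end
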